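(* Let $E$ be a locally bounded or locally convex separable F-space with F-norm $\|\cdot\|$, and let $T:E\to E$ be an operator satisfying the Frequent Hypercyclicity Criterion with dense set $E_0$ and map $S:E_0\to E_0$. Let $(a_k)_{k\ge1}$ be a sequence of nonzero scalars and $(x_k)_{k\ge1}$ a dense sequence in $E_0$. Then there exists an increasing sequence $(n_k)_{k\ge1}$ of positive integers such that the series $x=\sum_{k\ge1}a_kS^{n_k}(x_k)$ converges in $E$ and $x$ is a supercyclic vector for $T$.
   Context: An F-space is a complete metrizable topological vector space; operator means continuous linear map. $T$ satisfies the Frequent Hypercyclicity Criterion if there exist a dense subset $E_0\subseteq E$ and a map $S:E_0\to E_0$ such that for every $x\in E_0$: (i) $\sum_{n\ge0}T^n(x)$ is unconditionally convergent, (ii) $\sum_{n\ge0}S^n(x)$ is unconditionally convergent, (iii) $TS(x)=x$. A vector $x$ is supercyclic for $T$ if $\{\lambda T^n(x): n\ge0,\lambda\in\mathbb{K}\}$ is dense in $E$. *)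

theory Defs
  imports Complex_Main "HOL-Library.Countable_Set"
begin

text \<open>
  The scalar field is a type 'k of class real_normed_field (in practice
  real or complex, K = R or C).  The F-space E is the whole of a type 'a which is a
  vector space over 'k via the scalar multiplication smul, and whose topology is the
  one induced by an F-norm N (metric d(x,y) = N (x - y)).
\<close>

definition F_norm :: "('k::real_normed_field \<Rightarrow> 'a::ab_group_add \<Rightarrow> 'a) \<Rightarrow> ('a \<Rightarrow> real) \<Rightarrow> bool" where
  "F_norm smul N \<longleftrightarrow>
     (\<forall>x. N x = 0 \<longleftrightarrow> x = 0) \<and>
     (\<forall>x. N x \<ge> 0) \<and>
     (\<forall>c x. norm c \<le> 1 \<longrightarrow> N (smul c x) \<le> N x) \<and>
     (\<forall>x y. N (x + y) \<le> N x + N y) \<and>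
     (\<forall>x. \<forall>\<epsilon>>0. \<exists>\<delta>>0. \<forall>c. norm c < \<delta> \<longrightarrow> N (smul c x) < \<epsilon>)"

definition Nconv :: "('a::ab_group_add \<Rightarrow> real) \<Rightarrow> (nat \<Rightarrow> 'a) \<Rightarrow> 'a \<Rightarrow> bool" where
  "Nconv N f L \<longleftrightarrow> (\<forall>\<epsilon>>0. \<exists>M. \<forall>m\<ge>M. N (f m - L) < \<epsilon>)"

definition Ncauchy :: "('a::ab_group_add \<Rightarrow> real) \<Rightarrow> (nat \<Rightarrow> 'a) \<Rightarrow> bool" where
  "Ncauchy N f \<longleftrightarrow> (\<forall>\<epsilon>>0. \<exists>M. \<forall>m\<ge>M. \<forall>n\<ge>M. N (f m - f n) < \<epsilon>)"

definition Ndense_in :: "('a::ab_group_add \<Rightarrow> real) \<Rightarrow> 'a set \<Rightarrow> 'a set \<Rightarrow> bool" where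
  "Ndense_in N D A \<longleftrightarrow> (\<forall>y\<in>A. \<forall>\<epsilon>>0. \<exists>d\<in>D. N (y - d) < \<epsilon>)"

definition F_space :: "('k::real_normed_field \<Rightarrow> 'a::ab_group_add \<Rightarrow> 'a) \<Rightarrow> ('a \<Rightarrow> real) \<Rightarrow> bool" where
  "F_space smul N \<longleftrightarrow> vector_space smul \<and> F_norm smul N \<and>
     (\<forall>f. Ncauchy N f \<longrightarrow> (\<exists>L. Nconv N f L))"

definition Nseparable :: "('a::ab_group_add \<Rightarrow> real) \<Rightarrow> bool" where
  "Nseparable N \<longleftrightarrow> (\<exists>D. countable D \<and> Ndense_in N D UNIV)"

definition Nball0 :: "('a::ab_group_add \<Rightarrow> real) \<Rightarrow> real \<Rightarrow> 'a set" where
  "Nball0 N r = {x. N x < r}"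

definition Nbounded :: "('k::real_normed_field \<Rightarrow> 'a::ab_group_add \<Rightarrow> 'a) \<Rightarrow> ('a \<Rightarrow> real) \<Rightarrow> 'a set \<Rightarrow> bool" where
  "Nbounded smul N B \<longleftrightarrow>
     (\<forall>U. (\<exists>r>0. Nball0 N r \<subseteq> U) \<longrightarrow> (\<exists>t>0. \<forall>c. norm c \<le> t \<longrightarrow> smul c ` B \<subseteq> U))"

definition locally_bounded :: "('k::real_normed_field \<Rightarrow> 'a::ab_group_add \<Rightarrow> 'a) \<Rightarrow> ('a \<Rightarrow> real) \<Rightarrow> bool" where
  "locally_bounded smul N \<longleftrightarrow> (\<exists>U. (\<exists>r>0. Nball0 N r \<subseteq> U) \<and> Nbounded smul N U)"

definition convex_set :: "('k::real_normed_field \<Rightarrow> 'a::ab_group_add \<Rightarrow> 'a) \<Rightarrow> 'a set \<Rightarrow> bool" where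
  "convex_set smul U \<longleftrightarrow>
     (\<forall>x\<in>U. \<forall>y\<in>U. \<forall>t::real. 0 \<le> t \<and> t \<le> 1 \<longrightarrow> smul (of_real t) x + smul (of_real (1 - t)) y \<in> U)"

definition locally_convex :: "('k::real_normed_field \<Rightarrow> 'a::ab_group_add \<Rightarrow> 'a) \<Rightarrow> ('a \<Rightarrow> real) \<Rightarrow> bool" where
  "locally_convex smul N \<longleftrightarrow>
     (\<forall>\<epsilon>>0. \<exists>U. convex_set smul U \<and> (\<exists>r>0. Nball0 N r \<subseteq> U) \<and> U \<subseteq> Nball0 N \<epsilon>)"

definition operator :: "('k::real_normed_field \<Rightarrow> 'a::ab_group_add \<Rightarrow> 'a) \<Rightarrow> ('a \<Rightarrow> real) \<Rightarrow> ('a \<Rightarrow> 'a) \<Rightarrow> bool" where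
  "operator smul N T \<longleftrightarrow> Vector_Spaces.linear smul smul T \<and>
     (\<forall>x. \<forall>\<epsilon>>0. \<exists>\<delta>>0. \<forall>y. N (y - x) < \<delta> \<longrightarrow> N (T y - T x) < \<epsilon>)"

definition uncond_convergent :: "('a::ab_group_add \<Rightarrow> real) \<Rightarrow> (nat \<Rightarrow> 'a) \<Rightarrow> bool" where
  "uncond_convergent N f \<longleftrightarrow>
     (\<forall>\<sigma>. bij \<sigma> \<longrightarrow> (\<exists>L. Nconv N (\<lambda>m. \<Sum>n<m. f (\<sigma> n)) L))"

definition FHC_with :: "('a::ab_group_add \<Rightarrow> real) \<Rightarrow> ('a \<Rightarrow> 'a) \<Rightarrow> 'a set \<Rightarrow> ('a \<Rightarrow> 'a) \<Rightarrow> bool" where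
  "FHC_with N T E0 S \<longleftrightarrow> Ndense_in N E0 UNIV \<and> S ` E0 \<subseteq> E0 \<and>
     (\<forall>x\<in>E0. uncond_convergent N (\<lambda>n. (T ^^ n) x) \<and>
             uncond_convergent N (\<lambda>n. (S ^^ n) x) \<and> T (S x) = x)"

definition supercyclic :: "('k::real_normed_field \<Rightarrow> 'a::ab_group_add \<Rightarrow> 'a) \<Rightarrow> ('a \<Rightarrow> real) \<Rightarrow> ('a \<Rightarrow> 'a) \<Rightarrow> 'a \<Rightarrow> bool" where
  "supercyclic smul N T x \<longleftrightarrow> Ndense_in N {smul c ((T ^^ n) x) | c n. True} UNIV"

end

theory Submission
  imports Defs
begin

locale fsp =
  fixes smul :: "'k::real_normed_field \<Rightarrow> 'a::ab_group_add \<Rightarrow> 'a" and N :: "'a \<Rightarrow> real"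
  assumes vs: "vector_space smul" and FN: "F_norm smul N"
begin

sublocale vector_space smul by (rule vs)

lemma N_zero_iff: "N x = 0 \<longleftrightarrow> x = 0" using FN unfolding F_norm_def by blast
lemma N_zero[simp]: "N 0 = 0" using N_zero_iff by blast
lemma N_nonneg: "N x \<ge> 0" using FN unfolding F_norm_def by blast
lemma N_le: "norm c \<le> 1 \<Longrightarrow> N (smul c x) \<le> N x" using FN unfolding F_norm_def by blast
lemma N_tri: "N (x + y) \<le> N x + N y" using FN unfolding F_norm_def by blast
lemma N_small: "\<epsilon> > 0 \<Longrightarrow> \<exists>\<delta>>0. \<forall>c. norm c < \<delta> \<longrightarrow> N (smul c x) < \<epsilon>"
  using FN unfolding F_norm_def by blast

lemma N_neg: "N (- x) = N x"
proof -
  have a: "N (- y) \<le> N y" for y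
  proof -
    have "- y = smul (-1) y" by simp
    then show ?thesis using N_le[of "-1" y] by simp
  qed
  show ?thesis using a[of x] a[of "-x"] by simp
qed

lemma N_sym: "N (x - y) = N (y - x)"
  by (metis N_neg minus_diff_eq)

lemma N_tri2: "N (x - z) \<le> N (x - y) + N (y - z)"
  using N_tri[of "x - y" "y - z"] by simp

lemma N_sum: "N (sum f A) \<le> (\<Sum>i\<in>A. N (f i))"
proof (induction A rule: infinite_finite_induct)
  case (insert x F)
  then show ?case using N_tri[of "f x" "sum f F"] by simp
qed simp_all

lemma N_nat: "N (smul (of_nat m) x) \<le> of_nat m * N x"
proof (induction m)
  case (Suc m)
  have "smul (of_nat (Suc m)) x = smul (of_nat m) x + x"
    by (simp add: scale_left_distrib)
  then show ?case using N_tri[of "smul (of_nat m) x" x] Suc by (simp add: algebra_simps)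
qed simp

lemma N_scale: "\<exists>K>0. \<forall>x. N (smul c x) \<le> K * N x"
proof -
  define m :: nat where "m = nat \<lceil>norm c\<rceil> + 1"
  have m1: "real m \<ge> 1" and mc: "norm c \<le> real m" unfolding m_def by linarith+
  have "m \<noteq> 0" using m1 by auto
  define c' where "c' = c / of_nat m"
  have nc: "norm c' \<le> 1" using mc m1 unfolding c'_def by (simp add: norm_divide field_simps)
  have cc: "c = of_nat m * c'" unfolding c'_def using \<open>m \<noteq> 0\<close> by simp
  have "N (smul c x) \<le> real m * N x" for x
  proof -
    have "N (smul c x) = N (smul (of_nat m) (smul c' x))" by (simp add: cc)
    also have "\<dots> \<le> real m * N (smul c' x)" by (rule N_nat)
    also have "\<dots> \<le> real m * N x" using N_le[OF nc] m1 by (simp add: mult_left_mono)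
    finally show ?thesis .
  qed
  then show ?thesis using m1 by (intro exI[of _ "real m"]) auto
qed


lemma Nconv_iff: "Nconv N f L \<longleftrightarrow> (\<lambda>m. N (f m - L)) \<longlonglongrightarrow> 0"
  unfolding Nconv_def LIMSEQ_def dist_real_def using N_nonneg by simp

lemma tendsto_N_scale:
  assumes "(\<lambda>m. N (g m)) \<longlonglongrightarrow> 0"
  shows "(\<lambda>m. N (smul c (g m))) \<longlonglongrightarrow> 0"
proof -
  obtain K where K: "K > 0" "\<And>x. N (smul c x) \<le> K * N x" using N_scale by blast
  have h: "(\<lambda>m. K * N (g m)) \<longlonglongrightarrow> 0" using tendsto_mult_right_zero[OF assms] .
  have ev1: "\<forall>\<^sub>F m in sequentially. 0 \<le> N (smul c (g m))" by (rule always_eventually) (simp add: N_nonneg)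
  have ev2: "\<forall>\<^sub>F m in sequentially. N (smul c (g m)) \<le> K * N (g m)" by (rule always_eventually) (simp add: K(2))
  show ?thesis by (rule tendsto_sandwich[OF ev1 ev2 tendsto_const h])
qed

lemma uncond_terms:
  assumes "uncond_convergent N f"
  shows "(\<lambda>m. N (f m)) \<longlonglongrightarrow> 0"
proof -
  have "\<exists>L. Nconv N (\<lambda>m. \<Sum>n<m. f (id n)) L"
    using assms bij_id unfolding uncond_convergent_def by blast
  then obtain L where L: "Nconv N (\<lambda>m. \<Sum>n<m. f n) L" by auto
  define s where "s m = (\<Sum>n<m. f n)" for m
  have t: "(\<lambda>m. N (s m - L)) \<longlonglongrightarrow> 0" using L unfolding Nconv_iff s_def .
  have t2: "(\<lambda>m. N (s (Suc m) - L)) \<longlonglongrightarrow> 0" using LIMSEQ_Suc[OF t] .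
  have h: "(\<lambda>m. N (s (Suc m) - L) + N (s m - L)) \<longlonglongrightarrow> 0" using tendsto_add_zero[OF t2 t] .
  have le: "N (f m) \<le> N (s (Suc m) - L) + N (s m - L)" for m
  proof -
    have "f m = s (Suc m) - s m" unfolding s_def by simp
    then have "N (f m) \<le> N (s (Suc m) - L) + N (L - s m)" using N_tri2[of "s (Suc m)" "s m" L] by simp
    then show ?thesis using N_sym[of L "s m"] by simp
  qed
  have ev1: "\<forall>\<^sub>F m in sequentially. 0 \<le> N (f m)" by (rule always_eventually) (simp add: N_nonneg)
  have ev2: "\<forall>\<^sub>F m in sequentially. N (f m) \<le> N (s (Suc m) - L) + N (s m - L)"
    by (rule always_eventually) (rule allI, rule le)
  show ?thesis by (rule tendsto_sandwich[OF ev1 ev2 tendsto_const h])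
qed

lemma geom_half: "n \<le> m \<Longrightarrow> (\<Sum>k\<in>{n<..m}. (1/2::real)^k) = (1/2)^n - (1/2)^m"
proof (induction m rule: dec_induct)
  case (step m)
  have "{n<..Suc m} = insert (Suc m) {n<..m}" using step by auto
  then show ?case using step by simp
qed simp

end

locale setting = fsp smul N
  for smul :: "'k::real_normed_field \<Rightarrow> 'a::ab_group_add \<Rightarrow> 'a" and N :: "'a \<Rightarrow> real" +
  fixes T S :: "'a \<Rightarrow> 'a" and E0 :: "'a set" and a :: "nat \<Rightarrow> 'k" and xs :: "nat \<Rightarrow> 'a"
  assumes complete: "\<And>f. Ncauchy N f \<Longrightarrow> \<exists>L. Nconv N f L"
    and op: "operator smul N T"
    and fhc: "FHC_with N T E0 S"
    and anz: "\<And>k. k \<ge> 1 \<Longrightarrow> a k \<noteq> 0"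
    and xsE: "\<And>k. k \<ge> 1 \<Longrightarrow> xs k \<in> E0"
    and dens: "Ndense_in N (xs ` {1..}) E0"
begin

lemma lin: "Vector_Spaces.linear smul smul T" using op unfolding operator_def by blast

lemma mh: "module_hom smul smul T" using lin module_hom_iff_linear by blast
lemma T_add: "T (x + y) = T x + T y" using module_hom.add[OF mh] .
lemma T_scale: "T (smul c x) = smul c (T x)" using module_hom.scale[OF mh] .

lemma Tn_add: "(T ^^ n) (x + y) = (T ^^ n) x + (T ^^ n) y"
  by (induction n) (simp_all add: T_add)
lemma Tn_scale: "(T ^^ n) (smul c x) = smul c ((T ^^ n) x)"
  by (induction n) (simp_all add: T_scale)
lemma Tn_sum: "(T ^^ n) (sum f A) = (\<Sum>i\<in>A. (T ^^ n) (f i))"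
proof (induction A rule: infinite_finite_induct)
  case (infinite A) then show ?case by (induction n) (simp_all add: module_hom.zero[OF mh])
next
  case empty then show ?case by (induction n) (simp_all add: module_hom.zero[OF mh])
next
  case (insert x F) then show ?case by (simp add: Tn_add)
qed

lemma T_cont: "Nconv N f L \<Longrightarrow> Nconv N (\<lambda>m. T (f m)) (T L)"
  unfolding Nconv_def
proof (intro allI impI)
  fix \<epsilon> :: real assume "\<epsilon> > 0" "\<forall>\<epsilon>>0. \<exists>M. \<forall>m\<ge>M. N (f m - L) < \<epsilon>"
  moreover obtain \<delta> where "\<delta> > 0" "\<And>y. N (y - L) < \<delta> \<Longrightarrow> N (T y - T L) < \<epsilon>"
    using op \<open>\<epsilon> > 0\<close> unfolding operator_def by blast
  ultimately show "\<exists>M. \<forall>m\<ge>M. N (T (f m) - T L) < \<epsilon>" by blast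
qed

lemma Tn_cont: "Nconv N f L \<Longrightarrow> Nconv N (\<lambda>m. (T ^^ n) (f m)) ((T ^^ n) L)"
proof (induction n)
  case 0 then show ?case by simp
next
  case (Suc n) then show ?case using T_cont[of "\<lambda>m. (T ^^ n) (f m)" "(T ^^ n) L"] by simp
qed

lemma S_E0: "x \<in> E0 \<Longrightarrow> S x \<in> E0" using fhc unfolding FHC_with_def by blast
lemma TS: "x \<in> E0 \<Longrightarrow> T (S x) = x" using fhc unfolding FHC_with_def by blast
lemma Sn_E0: "x \<in> E0 \<Longrightarrow> (S ^^ n) x \<in> E0" by (induction n) (simp_all add: S_E0)
lemma TnSn: "x \<in> E0 \<Longrightarrow> (T ^^ n) ((S ^^ n) x) = x"
proof (induction n)
  case (Suc n)
  have "(T ^^ Suc n) ((S ^^ Suc n) x) = (T ^^ n) (T (S ((S ^^ n) x)))"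
    by (simp add: funpow_Suc_right funpow_swap1 del: funpow.simps)
  also have "\<dots> = (T ^^ n) ((S ^^ n) x)" using TS[OF Sn_E0[OF Suc.prems]] by simp
  also have "\<dots> = x" using Suc by blast
  finally show ?case .
qed simp

lemma TS_le: "x \<in> E0 \<Longrightarrow> q \<le> p \<Longrightarrow> (T ^^ p) ((S ^^ q) x) = (T ^^ (p - q)) x"
proof -
  assume x: "x \<in> E0" and qp: "q \<le> p"
  have "(T ^^ p) = (T ^^ (p - q)) \<circ> (T ^^ q)" using funpow_add[of "p - q" q T] qp by simp
  then show ?thesis by (simp add: TnSn[OF x])
qed

lemma TS_ge: "x \<in> E0 \<Longrightarrow> p \<le> q \<Longrightarrow> (T ^^ p) ((S ^^ q) x) = (S ^^ (q - p)) x"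
proof -
  assume x: "x \<in> E0" and pq: "p \<le> q"
  have "(S ^^ q) = (S ^^ p) \<circ> (S ^^ (q - p))" using funpow_add[of p "q - p" S] pq by simp
  then show ?thesis by (simp add: TnSn[OF Sn_E0[OF x]])
qed

lemma T_null: "x \<in> E0 \<Longrightarrow> (\<lambda>m. N ((T ^^ m) x)) \<longlonglongrightarrow> 0"
  using fhc uncond_terms unfolding FHC_with_def by blast
lemma S_null: "x \<in> E0 \<Longrightarrow> (\<lambda>m. N ((S ^^ m) x)) \<longlonglongrightarrow> 0"
  using fhc uncond_terms unfolding FHC_with_def by blast


definition C where "C j = (SOME K. K > 0 \<and> (\<forall>x. N (smul (inverse (a j)) x) \<le> K * N x))"

lemma C: "C j > 0" "N (smul (inverse (a j)) x) \<le> C j * N x"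
  using someI_ex[OF N_scale[of "inverse (a j)"]] unfolding C_def by blast+

definition e where "e i = (if i = 0 then 1 else 1 / (2 * real i * C i))"

lemma e_pos: "e i > 0" unfolding e_def using C(1)[of i] by auto

definition Q where "Q j p m \<longleftrightarrow> p (j - 1) < m \<and>
   (\<forall>i<j. N (smul (a j) ((S ^^ (m - p i)) (xs j))) < e i * (1/2)^j) \<and>
   C j * (\<Sum>k\<in>{1..<j}. N (smul (a k) ((T ^^ (m - p k)) (xs k)))) < 1 / (2 * real j)"

lemma Q_ex:
  assumes "j \<ge> 1" shows "\<exists>m. Q j p m"
proof -
  have x: "xs j \<in> E0" using xsE assms by blast
  have e1: "\<forall>\<^sub>F m in sequentially. p (j - 1) < m" by (rule eventually_gt_at_top)
  have e2: "\<forall>\<^sub>F m in sequentially. \<forall>i\<in>{..<j}. N (smul (a j) ((S ^^ (m - p i)) (xs j))) < e i * (1/2)^j"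
  proof (rule eventually_ball_finite)
    show "finite {..<j}" by simp
    show "\<forall>i\<in>{..<j}. \<forall>\<^sub>F m in sequentially. N (smul (a j) ((S ^^ (m - p i)) (xs j))) < e i * (1/2)^j"
    proof
      fix i
      have "(\<lambda>m. N ((S ^^ (m - p i)) (xs j))) \<longlonglongrightarrow> 0"
        using filterlim_compose[OF S_null[OF x] filterlim_minus_const_nat_at_top] by simp
      then have "(\<lambda>m. N (smul (a j) ((S ^^ (m - p i)) (xs j)))) \<longlonglongrightarrow> 0" by (rule tendsto_N_scale)
      then show "\<forall>\<^sub>F m in sequentially. N (smul (a j) ((S ^^ (m - p i)) (xs j))) < e i * (1/2)^j"
        by (rule order_tendstoD(2)) (simp add: e_pos)
    qed
  qed
  have "(\<lambda>m. C j * (\<Sum>k\<in>{1..<j}. N (smul (a k) ((T ^^ (m - p k)) (xs k))))) \<longlonglongrightarrow> 0"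
  proof (rule tendsto_mult_right_zero, rule tendsto_null_sum)
    fix k assume "k \<in> {1..<j}"
    then have xk: "xs k \<in> E0" using xsE by auto
    have "(\<lambda>m. N ((T ^^ (m - p k)) (xs k))) \<longlonglongrightarrow> 0"
      using filterlim_compose[OF T_null[OF xk] filterlim_minus_const_nat_at_top] by simp
    then show "(\<lambda>m. N (smul (a k) ((T ^^ (m - p k)) (xs k)))) \<longlonglongrightarrow> 0" by (rule tendsto_N_scale)
  qed
  then have e3: "\<forall>\<^sub>F m in sequentially. C j * (\<Sum>k\<in>{1..<j}. N (smul (a k) ((T ^^ (m - p k)) (xs k)))) < 1 / (2 * real j)"
    by (rule order_tendstoD(2)) (use assms in simp)
  have "\<forall>\<^sub>F m in sequentially. Q j p m"
    using eventually_conj[OF e1 eventually_conj[OF e2 e3]] by (rule eventually_mono) (auto simp: Q_def)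
  then show ?thesis by (meson eventually_sequentially order_refl)
qed

lemma Q_cong: "(\<And>i. i < j \<Longrightarrow> p i = p' i) \<Longrightarrow> j \<ge> 1 \<Longrightarrow> Q j p m = Q j p' m"
proof -
  assume h: "\<And>i. i < j \<Longrightarrow> p i = p' i" and j: "j \<ge> 1"
  have "(\<Sum>k\<in>{1..<j}. N (smul (a k) ((T ^^ (m - p k)) (xs k))))
      = (\<Sum>k\<in>{1..<j}. N (smul (a k) ((T ^^ (m - p' k)) (xs k))))"
    by (rule sum.cong) (auto simp: h)
  moreover have "p (j - 1) = p' (j - 1)" using h j by simp
  ultimately show ?thesis unfolding Q_def using h by auto
qed

primrec F :: "nat \<Rightarrow> nat \<Rightarrow> nat" where
  "F 0 = (\<lambda>_. 0)"
| "F (Suc j) = (F j)(Suc j := (SOME m. Q (Suc j) (F j) m))"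

definition n where "n j = F j j"

lemma F_stable: "i \<le> j \<Longrightarrow> F j i = n i"
proof (induction j)
  case 0 then show ?case by (simp add: n_def)
next
  case (Suc j)
  then show ?case by (cases "i = Suc j") (auto simp: n_def)
qed

lemma n0: "n 0 = 0" by (simp add: n_def)

lemma nQ: assumes "j \<ge> 1" shows "Q j n (n j)"
proof -
  obtain j' where j': "j = Suc j'" using assms by (cases j) auto
  have "Q (Suc j') (F j') (SOME m. Q (Suc j') (F j') m)" by (rule someI_ex[OF Q_ex]) simp
  moreover have "n (Suc j') = (SOME m. Q (Suc j') (F j') m)" by (simp add: n_def)
  ultimately have "Q (Suc j') (F j') (n (Suc j'))" by simp
  moreover have "Q (Suc j') (F j') (n (Suc j')) = Q (Suc j') n (n (Suc j'))"
    by (rule Q_cong) (auto simp: F_stable)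
  ultimately show ?thesis using j' by simp
qed

lemma n_mono: "strict_mono n"
proof (rule strict_mono_Suc_iff[THEN iffD2], intro allI)
  fix j show "n j < n (Suc j)" using nQ[of "Suc j"] unfolding Q_def by simp
qed

lemma bound1: "i < k \<Longrightarrow> N (smul (a k) ((S ^^ (n k - n i)) (xs k))) < e i * (1/2)^k"
  using nQ[of k] unfolding Q_def by auto

lemma bound2: "j \<ge> 1 \<Longrightarrow> C j * (\<Sum>k\<in>{1..<j}. N (smul (a k) ((T ^^ (n j - n k)) (xs k)))) < 1 / (2 * real j)"
  using nQ[of j] unfolding Q_def by auto


definition tm where "tm k = smul (a k) ((S ^^ n k) (xs k))"
definition sr where "sr m = (\<Sum>k\<in>{1..m}. tm k)"

lemma tm_bound: "k \<ge> 1 \<Longrightarrow> N (tm k) < (1/2)^k"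
  using bound1[of 0 k] by (simp add: tm_def n0 e_def)

lemma sr_diff: "q \<le> m \<Longrightarrow> sr m - sr q = (\<Sum>k\<in>{q<..m}. tm k)"
proof (induction m rule: dec_induct)
  case (step m)
  have "{q<..Suc m} = insert (Suc m) {q<..m}" using step by auto
  moreover have "{1..Suc m} = insert (Suc m) {1..m}" by auto
  ultimately show ?case using step by (simp add: sr_def)
qed simp

lemma sr_tail: "q \<le> m \<Longrightarrow> N (sr m - sr q) \<le> (1/2)^q"
proof -
  assume qm: "q \<le> m"
  have "N (sr m - sr q) \<le> (\<Sum>k\<in>{q<..m}. N (tm k))" unfolding sr_diff[OF qm] by (rule N_sum)
  also have "\<dots> \<le> (\<Sum>k\<in>{q<..m}. (1/2::real)^k)"
    by (rule sum_mono, rule less_imp_le, rule tm_bound) auto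
  also have "\<dots> = (1/2)^q - (1/2)^m" using geom_half[OF qm] .
  also have "\<dots> \<le> (1/2)^q" by simp
  finally show ?thesis .
qed

lemma sr_conv: "\<exists>x. Nconv N sr x"
proof (rule complete)
  show "Ncauchy N sr" unfolding Ncauchy_def
  proof (intro allI impI)
    fix \<epsilon> :: real assume "\<epsilon> > 0"
    obtain M where M: "(1/2::real)^M < \<epsilon>" using real_arch_pow_inv[OF \<open>\<epsilon> > 0\<close>, of "1/2"] by auto
    have "N (sr m - sr q) < \<epsilon>" if "m \<ge> M" "q \<ge> M" for m q
    proof (cases "q \<le> m")
      case True
      have "N (sr m - sr q) \<le> (1/2)^q" using sr_tail[OF True] .
      also have "\<dots> \<le> (1/2)^M" using that by (simp add: power_decreasing)
      finally show ?thesis using M by simp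
    next
      case False
      have "N (sr m - sr q) = N (sr q - sr m)" by (rule N_sym)
      also have "\<dots> \<le> (1/2)^m" using sr_tail False by simp
      also have "\<dots> \<le> (1/2)^M" using that by (simp add: power_decreasing)
      finally show ?thesis using M by simp
    qed
    then show "\<exists>M. \<forall>m\<ge>M. \<forall>q\<ge>M. N (sr m - sr q) < \<epsilon>" by blast
  qed
qed

definition AA where "AA j = (\<Sum>k\<in>{1..<j}. smul (a k) ((T ^^ (n j - n k)) (xs k)))"
definition BB where "BB j m = (\<Sum>k\<in>{j<..m}. smul (a k) ((S ^^ (n k - n j)) (xs k)))"

lemma T_sr: assumes j: "j \<ge> 1" and jm: "j \<le> m"
  shows "(T ^^ n j) (sr m) = AA j + smul (a j) (xs j) + BB j m"
proof -
  have "{1..j} = insert j {1..<j}" using j by auto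
  then have sj: "sr j = (\<Sum>k\<in>{1..<j}. tm k) + tm j" by (simp add: sr_def add.commute)
  have sm: "sr m = sr j + (\<Sum>k\<in>{j<..m}. tm k)" using sr_diff[OF jm] by (simp add: algebra_simps)
  have mono: "k < j \<Longrightarrow> n k < n j" for k using n_mono by (simp add: strict_mono_less)
  have mono2: "j < k \<Longrightarrow> n j < n k" for k using n_mono by (simp add: strict_mono_less)
  have "(T ^^ n j) (\<Sum>k\<in>{1..<j}. tm k) = AA j"
    unfolding Tn_sum AA_def tm_def Tn_scale
    by (rule sum.cong) (auto simp: TS_le xsE mono less_imp_le)
  moreover have "(T ^^ n j) (tm j) = smul (a j) (xs j)"
    unfolding tm_def Tn_scale using TnSn xsE j by simp
  moreover have "(T ^^ n j) (\<Sum>k\<in>{j<..m}. tm k) = BB j m"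
    unfolding Tn_sum BB_def tm_def Tn_scale
    by (rule sum.cong) (use j in \<open>auto simp: TS_ge xsE mono2 less_imp_le\<close>)
  ultimately show ?thesis unfolding sm sj Tn_add by simp
qed

lemma BB_bound: assumes "j \<ge> 1" shows "N (BB j m) \<le> e j * (1/2)^j"
proof (cases "j \<le> m")
  case True
  have "N (BB j m) \<le> (\<Sum>k\<in>{j<..m}. N (smul (a k) ((S ^^ (n k - n j)) (xs k))))"
    unfolding BB_def by (rule N_sum)
  also have "\<dots> \<le> (\<Sum>k\<in>{j<..m}. e j * (1/2)^k)"
    by (rule sum_mono) (auto intro: less_imp_le bound1)
  also have "\<dots> = e j * ((1/2)^j - (1/2)^m)" by (simp add: sum_distrib_left[symmetric] geom_half[OF True])
  also have "\<dots> \<le> e j * (1/2)^j" using e_pos[of j] by (simp add: mult_left_mono)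
  finally show ?thesis .
next
  case False
  then have "BB j m = 0" unfolding BB_def by simp
  then show ?thesis using e_pos[of j] by simp
qed

lemma key: assumes j: "j \<ge> 1" and x: "Nconv N sr x"
  shows "N (smul (inverse (a j)) ((T ^^ n j) x) - xs j) < 1 / real j"
proof -
  define D where "D = (T ^^ n j) x - AA j - smul (a j) (xs j)"
  have Dle: "N D \<le> e j * (1/2)^j + \<epsilon>" if "\<epsilon> > 0" for \<epsilon>
  proof -
    obtain M where M: "\<And>m. m \<ge> M \<Longrightarrow> N ((T ^^ n j) (sr m) - (T ^^ n j) x) < \<epsilon>"
      using Tn_cont[OF x, of "n j"] \<open>\<epsilon> > 0\<close> unfolding Nconv_def by blast
    define m where "m = max M j"
    have "D = ((T ^^ n j) x - (T ^^ n j) (sr m)) + BB j m"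
      unfolding D_def using T_sr[OF j, of m] by (simp add: m_def algebra_simps)
    then have "N D \<le> N ((T ^^ n j) x - (T ^^ n j) (sr m)) + N (BB j m)" using N_tri by simp
    also have "\<dots> < \<epsilon> + e j * (1/2)^j"
      using M[of m] BB_bound[OF j, of m] N_sym[of "(T ^^ n j) x"] by (simp add: m_def)
    finally show ?thesis by simp
  qed
  have ND: "N D \<le> e j * (1/2)^j" by (rule field_le_epsilon) (rule Dle)
  have eq: "smul (inverse (a j)) ((T ^^ n j) x) - xs j = smul (inverse (a j)) (AA j + D)"
  proof -
    have "(T ^^ n j) x = smul (a j) (xs j) + (AA j + D)" unfolding D_def by simp
    then show ?thesis using anz[OF j] by (simp add: scale_right_distrib)
  qed
  have "N (smul (inverse (a j)) ((T ^^ n j) x) - xs j) \<le> C j * N (AA j + D)"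
    unfolding eq by (rule C(2))
  also have "\<dots> \<le> C j * (N (AA j) + N D)" using C(1)[of j] N_tri by (simp add: mult_left_mono)
  also have "\<dots> \<le> C j * (\<Sum>k\<in>{1..<j}. N (smul (a k) ((T ^^ (n j - n k)) (xs k)))) + C j * (e j * (1/2)^j)"
  proof -
    have "N (AA j) \<le> (\<Sum>k\<in>{1..<j}. N (smul (a k) ((T ^^ (n j - n k)) (xs k))))"
      unfolding AA_def by (rule N_sum)
    then show ?thesis using ND C(1)[of j] by (simp add: distrib_left add_mono mult_left_mono)
  qed
  also have "\<dots> < 1 / (2 * real j) + 1 / (2 * real j)"
  proof -
    have "C j * (e j * (1/2)^j) = (1/2)^j / (2 * real j)" using j C(1)[of j] by (simp add: e_def)
    also have "\<dots> \<le> 1 / (2 * real j)" using j by (simp add: divide_right_mono power_le_one)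
    finally show ?thesis using bound2[OF j] by simp
  qed
  also have "\<dots> = 1 / real j" by simp
  finally show ?thesis .
qed


lemma dens1: "\<epsilon> > 0 \<Longrightarrow> \<exists>k\<ge>1. N (y - xs k) < \<epsilon>"
proof -
  assume "\<epsilon> > 0"
  then obtain z where z: "z \<in> E0" "N (y - z) < \<epsilon>/2"
    using fhc \<open>\<epsilon> > 0\<close> unfolding FHC_with_def Ndense_in_def by (meson half_gt_zero UNIV_I)
  then obtain w where w: "w \<in> xs ` {1..}" "N (z - w) < \<epsilon>/2"
    using dens \<open>\<epsilon> > 0\<close> unfolding Ndense_in_def by (meson half_gt_zero)
  then obtain k where "k \<ge> 1" "w = xs k" by auto
  moreover have "N (y - w) < \<epsilon>" using N_tri2[of y w z] z w by simp
  ultimately show ?thesis by blast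
qed

lemma dens2: assumes "\<epsilon> > 0" shows "\<exists>k\<ge>K. k \<ge> 1 \<and> N (y - xs k) < \<epsilon>"
proof (cases "\<forall>z::'a. z = 0")
  case True
  then have "y - xs (max K 1) = 0" by blast
  then have "N (y - xs (max K 1)) = 0" by simp
  then show ?thesis using assms by (intro exI[of _ "max K 1"]) auto
next
  case False
  then obtain z :: 'a where z: "z \<noteq> 0" by blast
  obtain \<delta> where \<delta>: "\<delta> > 0" "\<And>c. norm c < \<delta> \<Longrightarrow> N (smul c z) < \<epsilon>/2"
    using N_small[of "\<epsilon>/2" z] assms by auto
  define Fs where "Fs = xs ` {1..<K}"
  have fin: "finite Fs" unfolding Fs_def by simp
  define R :: "'k set" where "R = of_real ` {0<..<\<delta>}"
  have "infinite {0<..<\<delta>}" using \<delta>(1) by simp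
  moreover have "inj_on (of_real :: real \<Rightarrow> 'k) {0<..<\<delta>}" by (simp add: inj_on_def)
  ultimately have infR: "infinite R" unfolding R_def using finite_imageD by blast
  have injg: "inj (\<lambda>c. y + smul c z)" by (rule injI) (use z in simp)
  have "inj_on (\<lambda>c. y + smul c z) R" using injg inj_on_subset by blast
  then have "infinite ((\<lambda>c. y + smul c z) ` R)"
    using infR finite_imageD by blast
  then have "\<not> (\<lambda>c. y + smul c z) ` R \<subseteq> Fs" using fin finite_subset by blast
  then obtain c where c: "c \<in> R" "y + smul c z \<notin> Fs" by blast
  define y' where "y' = y + smul c z"
  have "norm c < \<delta>" using c(1) unfolding R_def by auto
  then have yy': "N (y - y') < \<epsilon>/2" using \<delta>(2) N_neg[of "smul c z"] by (simp add: y'_def)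
  define d where "d = Min (insert 1 ((\<lambda>f. N (y' - f)) ` Fs))"
  have dpos: "d > 0" unfolding d_def
  proof (subst Min_gr_iff)
    show "\<forall>a\<in>insert 1 ((\<lambda>f. N (y' - f)) ` Fs). 0 < a"
    proof
      fix t assume "t \<in> insert 1 ((\<lambda>f. N (y' - f)) ` Fs)"
      then consider "t = 1" | f where "f \<in> Fs" "t = N (y' - f)" by auto
      then show "0 < t"
      proof cases
        case 2
        then have "y' \<noteq> f" using c(2) y'_def by auto
        then have "N (y' - f) \<noteq> 0" using N_zero_iff by simp
        then show ?thesis using 2 N_nonneg[of "y' - f"] by simp
      qed simp
    qed
  qed (use fin in auto)
  obtain k where k: "k \<ge> 1" "N (y' - xs k) < min d (\<epsilon>/2)"
    using dens1[of "min d (\<epsilon>/2)" y'] dpos assms by auto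
  have "k \<ge> K"
  proof (rule ccontr)
    assume "\<not> K \<le> k"
    then have "xs k \<in> Fs" unfolding Fs_def using k(1) by auto
    then have "d \<le> N (y' - xs k)" unfolding d_def using fin by (intro Min_le) auto
    then show False using k(2) by simp
  qed
  moreover have "N (y - xs k) < \<epsilon>" using N_tri2[of y "xs k" y'] yy' k(2) by simp
  ultimately show ?thesis using k(1) by blast
qed

lemma result:
  "\<exists>n :: nat \<Rightarrow> nat. strict_mono_on {1..} n \<and> (\<forall>k\<ge>1. n k > 0) \<and>
     (\<exists>x. Nconv N (\<lambda>m. \<Sum>k\<in>{1..m}. smul (a k) ((S ^^ n k) (xs k))) x \<and>
          supercyclic smul N T x)"
proof -
  obtain x where x: "Nconv N sr x" using sr_conv by blast
  show ?thesis
proof (intro exI[of _ n] exI[of _ x] conjI)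
  show "strict_mono_on {1..} n" using n_mono by (simp add: strict_mono_on_def strict_mono_def)
  show "\<forall>k\<ge>1. n k > 0"
  proof (intro allI impI)
    fix k :: nat assume "k \<ge> 1"
    then have "n 0 < n k" using n_mono by (simp add: strict_mono_less)
    then show "n k > 0" using n0 by simp
  qed
  show "Nconv N (\<lambda>m. \<Sum>k\<in>{1..m}. smul (a k) ((S ^^ n k) (xs k))) x"
    using x unfolding sr_def tm_def .
  show "supercyclic smul N T x" unfolding supercyclic_def Ndense_in_def
  proof (intro ballI allI impI)
    fix y :: 'a and \<epsilon> :: real assume "\<epsilon> > 0"
    define K where "K = nat \<lceil>2/\<epsilon>\<rceil> + 1"
    have K1: "K \<ge> 1" unfolding K_def by simp
    have "2/\<epsilon> \<le> real (nat \<lceil>2/\<epsilon>\<rceil>)" by (rule real_nat_ceiling_ge)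
    then have "2/\<epsilon> < real K" unfolding K_def by simp
    then have "2 < \<epsilon> * real K" using \<open>\<epsilon> > 0\<close> by (simp add: field_simps)
    then have "1 / real K < \<epsilon>/2" using K1 by (simp add: field_simps)
    note K = this K1
    obtain k where k: "k \<ge> K" "k \<ge> 1" "N (y - xs k) < \<epsilon>/2"
      using dens2[of "\<epsilon>/2" K y] \<open>\<epsilon> > 0\<close> by auto
    have "1 / real k \<le> 1 / real K" using k K by (simp add: frac_le)
    moreover have "N (xs k - smul (inverse (a k)) ((T ^^ n k) x)) < 1 / real k"
      using key[OF k(2) x] N_sym[of "xs k"] by simp
    ultimately have e2: "N (xs k - smul (inverse (a k)) ((T ^^ n k) x)) < \<epsilon>/2"
      using K by linarith
    have "N (y - smul (inverse (a k)) ((T ^^ n k) x)) < \<epsilon>"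
      using N_tri2[of y "smul (inverse (a k)) ((T ^^ n k) x)" "xs k"] k(3) e2 by linarith
    then show "\<exists>d\<in>{smul c ((T ^^ n) x) | c n. True}. N (y - d) < \<epsilon>" by blast
  qed
qed
qed

end


theorem mainTheorem4:
  fixes smul :: "'k::real_normed_field \<Rightarrow> 'a::ab_group_add \<Rightarrow> 'a"
    and N :: "'a \<Rightarrow> real"
    and T S :: "'a \<Rightarrow> 'a"
    and E0 :: "'a set"
    and a :: "nat \<Rightarrow> 'k"
    and xs :: "nat \<Rightarrow> 'a"
  assumes "F_space smul N"
    and "Nseparable N"
    and "locally_bounded smul N \<or> locally_convex smul N"
    and "operator smul N T"
    and "FHC_with N T E0 S"
    and "\<forall>k\<ge>1. a k \<noteq> 0"
    and "\<forall>k\<ge>1. xs k \<in> E0"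
    and "Ndense_in N (xs ` {1..}) E0"
  shows "\<exists>n :: nat \<Rightarrow> nat. strict_mono_on {1..} n \<and> (\<forall>k\<ge>1. n k > 0) \<and>
           (\<exists>x. Nconv N (\<lambda>m. \<Sum>k\<in>{1..m}. smul (a k) ((S ^^ n k) (xs k))) x \<and>
                supercyclic smul N T x)"
proof -
  have fs: "vector_space smul" "F_norm smul N" "\<forall>f. Ncauchy N f \<longrightarrow> (\<exists>L. Nconv N f L)"
    using assms(1) unfolding F_space_def by blast+
  have st: "setting smul N T S E0 a xs"
  proof (rule setting.intro)
    show "fsp smul N" using fs(1,2) by (rule fsp.intro)
    show "setting_axioms smul N T S E0 a xs"
    proof (rule setting_axioms.intro)
      show "\<And>f. Ncauchy N f \<Longrightarrow> \<exists>L. Nconv N f L" using fs(3) by blast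
      show "operator smul N T" by (rule assms(4))
      show "FHC_with N T E0 S" by (rule assms(5))
      show "\<And>k. 1 \<le> k \<Longrightarrow> a k \<noteq> 0" using assms(6) by blast
      show "\<And>k. 1 \<le> k \<Longrightarrow> xs k \<in> E0" using assms(7) by blast
      show "Ndense_in N (xs ` {1..}) E0" by (rule assms(8))
    qed
  qed
  show ?thesis by (rule setting.result[OF st])
qed

end
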